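(* Let $(W,S)$ be a Coxeter group with $W$ finite, and let $\mathfrak o$ be an orientation of $(W,S)$. Then $\mathfrak o=\mathfrak o_w$ for some $w\in W$.
   Context: $\ell$ is the length function of $(W,S)$ and $m(s,t)$ the order of $st$. An orientation of $(W,S)$ is a map $\mathfrak o:W\times S\to\{\pm1\}$ such that (OR1) $\mathfrak o(ws,s)=-\mathfrak o(w,s)$ for all $w\in W,s\in S$; and (OR2) whenever $s,t\in S$ with $m=m(s,t)<\infty$ and $w\in W$, the two sequences $(\mathfrak o(w,s),\mathfrak o(ws,t),\mathfrak o(wst,s),\dots)$ and $(\mathfrak o(w,t),\mathfrak o(wt,s),\mathfrak o(wts,t),\dots)$, each of length $m$, are for some $0\le k\le m$ either of the form $(+,\dots,+,-,\dots,-)$ ($k$ plus signs then $m-k$ minus signs) and $(-,\dots,-,+,\dots,+)$ ($m-k$ minus then $k$ plus), or of the form $(-,\dots,-,+,\dots,+)$ ($k$ minus then $m-k$ plus) and $(+,\dots,+,-,\dots,-)$ ($m-k$ plus then $k$ minus). For $w_0\in W$, the orientation towards $w_0$ is $\mathfrak o_{w_0}(w,s)=+1$ if $\ell(w_0^{-1}ws)<\ell(w_0^{-1}w)$ and $-1$ if $\ell(w_0^{-1}ws)>\ell(w_0^{-1}w)$. *)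

theory Defs
  imports "HOL-Algebra.Generated_Groups" "HOL-Algebra.Multiplicative_Group"
begin

text \<open>m(s,t): the order of st in W (0 if infinite, following group.ord).\<close>
definition cox_m :: "'a monoid \<Rightarrow> 'a \<Rightarrow> 'a \<Rightarrow> nat" where
  "cox_m W s t = group.ord W (s \<otimes>\<^bsub>W\<^esub> t)"

text \<open>Coxeter system via the universal property of the presentation
  <S | s^2, (st)^m(s,t)>.  Test groups H are taken with carrier type
  'a list set set, which suffices since the presented group has as elements
  equivalence classes of words over S.\<close>
definition coxeter_system :: "'a monoid \<Rightarrow> 'a set \<Rightarrow> bool" where
  "coxeter_system W S \<longleftrightarrow>
     group W \<and> S \<subseteq> carrier W \<and>
     (\<forall>s\<in>S. s \<noteq> \<one>\<^bsub>W\<^esub> \<and> s \<otimes>\<^bsub>W\<^esub> s = \<one>\<^bsub>W\<^esub>) \<and>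
     generate W S = carrier W \<and>
     (\<forall>(H :: 'a list set monoid) f. group H \<and> f \<in> S \<rightarrow> carrier H \<and>
        (\<forall>s\<in>S. \<forall>t\<in>S. (f s \<otimes>\<^bsub>H\<^esub> f t) [^]\<^bsub>H\<^esub> cox_m W s t = \<one>\<^bsub>H\<^esub>)
        \<longrightarrow> (\<exists>h\<in>hom W H. \<forall>s\<in>S. h s = f s))"

definition word_prod :: "'a monoid \<Rightarrow> 'a list \<Rightarrow> 'a" where
  "word_prod W ws = foldr (\<lambda>x y. x \<otimes>\<^bsub>W\<^esub> y) ws \<one>\<^bsub>W\<^esub>"

definition cox_length :: "'a monoid \<Rightarrow> 'a set \<Rightarrow> 'a \<Rightarrow> nat" where
  "cox_length W S w = (LEAST n. \<exists>ws. length ws = n \<and> set ws \<subseteq> S \<and> word_prod W ws = w)"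

fun alt_prod :: "'a monoid \<Rightarrow> 'a \<Rightarrow> 'a \<Rightarrow> nat \<Rightarrow> 'a" where
  "alt_prod W s t 0 = \<one>\<^bsub>W\<^esub>"
| "alt_prod W s t (Suc n) = alt_prod W s t n \<otimes>\<^bsub>W\<^esub> (if even n then s else t)"

text \<open>i-th term (0-based) of the sequence (o(w,s), o(ws,t), o(wst,s), ...).\<close>
definition or_seq :: "'a monoid \<Rightarrow> ('a \<Rightarrow> 'a \<Rightarrow> int) \<Rightarrow> 'a \<Rightarrow> 'a \<Rightarrow> 'a \<Rightarrow> nat \<Rightarrow> int" where
  "or_seq W ori w s t i = ori (w \<otimes>\<^bsub>W\<^esub> alt_prod W s t i) (if even i then s else t)"

definition orientation :: "'a monoid \<Rightarrow> 'a set \<Rightarrow> ('a \<Rightarrow> 'a \<Rightarrow> int) \<Rightarrow> bool" where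
  "orientation W S ori \<longleftrightarrow>
     (\<forall>w\<in>carrier W. \<forall>s\<in>S. ori w s \<in> {1, -1}) \<and>
     (\<forall>w\<in>carrier W. \<forall>s\<in>S. ori (w \<otimes>\<^bsub>W\<^esub> s) s = - ori w s) \<and>
     (\<forall>s\<in>S. \<forall>t\<in>S. \<forall>w\<in>carrier W. cox_m W s t \<noteq> 0 \<longrightarrow>
        (let m = cox_m W s t in
         \<exists>k\<le>m.
          (\<forall>i<m. or_seq W ori w s t i = (if i < k then 1 else -1) \<and>
                  or_seq W ori w t s i = (if i < m - k then -1 else 1)) \<or>
          (\<forall>i<m. or_seq W ori w s t i = (if i < k then -1 else 1) \<and>
                  or_seq W ori w t s i = (if i < m - k then 1 else -1))))"

definition orientation_towards :: "'a monoid \<Rightarrow> 'a set \<Rightarrow> 'a \<Rightarrow> 'a \<Rightarrow> 'a \<Rightarrow> int" where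
  "orientation_towards W S w0 w s =
     (if cox_length W S (inv\<^bsub>W\<^esub> w0 \<otimes>\<^bsub>W\<^esub> w \<otimes>\<^bsub>W\<^esub> s) < cox_length W S (inv\<^bsub>W\<^esub> w0 \<otimes>\<^bsub>W\<^esub> w)
      then 1 else -1)"

end

theory Submission
  imports Defs "HOL-Library.Nat_Bijection"
begin


locale grp = group G for G :: "'g monoid" (structure)

context grp begin

lemma alt_closed: "a \<in> carrier G \<Longrightarrow> b \<in> carrier G \<Longrightarrow> alt_prod G a b n \<in> carrier G"
  by (induction n) auto

lemma alt_even: "a \<in> carrier G \<Longrightarrow> b \<in> carrier G \<Longrightarrow> alt_prod G a b (2*k) = (a \<otimes> b) [^] k"
proof (induction k)
  case 0 then show ?case by simp
next
  case (Suc k)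
  have e: "2*Suc k = Suc (Suc (2*k))" by simp
  have "alt_prod G a b (2 * Suc k) = alt_prod G a b (2*k) \<otimes> a \<otimes> b"
    unfolding e alt_prod.simps by simp
  also have "\<dots> = (a \<otimes> b) [^] k \<otimes> (a \<otimes> b)" using Suc by (simp add: m_assoc)
  also have "\<dots> = (a \<otimes> b) [^] Suc k" by (simp only: nat_pow_Suc)
  finally show ?case .
qed

lemma alt_odd: "a \<in> carrier G \<Longrightarrow> b \<in> carrier G \<Longrightarrow> alt_prod G a b (Suc (2*k)) = (a \<otimes> b) [^] k \<otimes> a"
  using alt_even by simp

lemma alt_prepend:
  "a \<in> carrier G \<Longrightarrow> b \<in> carrier G \<Longrightarrow> alt_prod G a b (Suc n) = a \<otimes> alt_prod G b a n"
proof (induction n arbitrary: a b)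
  case 0 then show ?case by simp
next
  case (Suc n)
  have "alt_prod G a b (Suc (Suc n)) = alt_prod G a b (Suc n) \<otimes> (if even n then b else a)"
    by simp
  also have "\<dots> = a \<otimes> alt_prod G b a n \<otimes> (if even n then b else a)" using Suc by simp
  also have "\<dots> = a \<otimes> (alt_prod G b a n \<otimes> (if even n then b else a))"
    using Suc.prems by (simp add: m_assoc alt_closed)
  also have "\<dots> = a \<otimes> alt_prod G b a (Suc n)" by simp
  finally show ?case .
qed

lemma alt_inv:
  assumes "a \<in> carrier G" "b \<in> carrier G" "a \<otimes> a = \<one>" "b \<otimes> b = \<one>"
  shows "alt_prod G a b n \<otimes> alt_prod G (if even n then b else a) (if even n then a else b) n = \<one>"
  using assms
proof (induction n arbitrary: a b)
  case 0 then show ?case by simp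
next
  case (Suc n)
  define c where "c = (if even n then a else b)"
  define d where "d = (if even n then b else a)"
  have cd: "c \<in> carrier G" "d \<in> carrier G" using Suc.prems by (auto simp: c_def d_def)
  have IH: "alt_prod G b a n \<otimes> alt_prod G c d n = \<one>"
    using Suc.IH[of b a] Suc.prems by (simp add: c_def d_def)
  have e: "alt_prod G (if even (Suc n) then b else a) (if even (Suc n) then a else b) (Suc n)
      = alt_prod G c d n \<otimes> a" by (simp add: c_def d_def)
  have X: "alt_prod G b a n \<in> carrier G" "alt_prod G c d n \<in> carrier G"
    using Suc.prems cd by (auto simp: alt_closed)
  have P: "alt_prod G a b (Suc n) = a \<otimes> alt_prod G b a n"
    by (rule alt_prepend) (use Suc.prems in auto)
  have "alt_prod G a b (Suc n) \<otimes> (alt_prod G c d n \<otimes> a)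
      = a \<otimes> alt_prod G b a n \<otimes> (alt_prod G c d n \<otimes> a)"
    by (simp only: P)
  also have "\<dots> = a \<otimes> (alt_prod G b a n \<otimes> alt_prod G c d n) \<otimes> a"
    using Suc.prems X by (simp only: m_assoc m_closed)
  also have "\<dots> = \<one>" using IH Suc.prems by simp
  finally show ?case using e by simp
qed

lemma inv_invol_prod:
  assumes "a \<in> carrier G" "b \<in> carrier G" "a \<otimes> a = \<one>" "b \<otimes> b = \<one>"
  shows "inv (a \<otimes> b) = b \<otimes> a"
proof (rule inv_equality)
  have "a \<otimes> (a \<otimes> b) = b" using assms by (simp add: m_assoc[symmetric])
  then have "b \<otimes> (a \<otimes> (a \<otimes> b)) = \<one>" using assms by simp
  then show "(b \<otimes> a) \<otimes> (a \<otimes> b) = \<one>" using assms by (simp add: m_assoc)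
qed (use assms in auto)

lemma invol_prod_inv:
  assumes "a \<in> carrier G" "b \<in> carrier G" "a \<otimes> a = \<one>" "b \<otimes> b = \<one>"
  shows "(b \<otimes> a) [^] (k::nat) = inv ((a \<otimes> b) [^] k)"
proof -
  have "(b \<otimes> a) [^] k = (inv (a \<otimes> b)) [^] k" using inv_invol_prod[OF assms] by simp
  also have "\<dots> = inv ((a \<otimes> b) [^] k)" using assms by (simp add: nat_pow_inv)
  finally show ?thesis .
qed

lemma eq_inv_iff: "x \<in> carrier G \<Longrightarrow> y \<in> carrier G \<Longrightarrow> y = inv x \<longleftrightarrow> y \<otimes> x = \<one>"
proof
  assume "x \<in> carrier G" "y \<in> carrier G" "y = inv x" then show "y \<otimes> x = \<one>" by simp
next
  assume "x \<in> carrier G" "y \<in> carrier G" "y \<otimes> x = \<one>"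
  then have "inv x = y" by (intro inv_equality) auto
  then show "y = inv x" by simp
qed

lemma braid_iff:
  assumes "a \<in> carrier G" "b \<in> carrier G" "a \<otimes> a = \<one>" "b \<otimes> b = \<one>"
  shows "alt_prod G a b m = alt_prod G b a m \<longleftrightarrow> (a \<otimes> b) [^] m = \<one>"
proof -
  have ab: "a \<otimes> b \<in> carrier G" "b \<otimes> a \<in> carrier G" using assms by auto
  obtain k where k: "m = 2*k \<or> m = Suc (2*k)" by (metis oddE evenE Suc_eq_plus1)
  define x where "x = (a \<otimes> b) [^] k"
  have x: "x \<in> carrier G" "inv x \<in> carrier G" using ab by (auto simp: x_def)
  have altab: "alt_prod G a b (2*k) = x" "alt_prod G a b (Suc (2*k)) = x \<otimes> a"
    using assms by (simp_all only: alt_even alt_odd x_def)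
  have altba: "alt_prod G b a (2*k) = inv x" "alt_prod G b a (Suc (2*k)) = inv x \<otimes> b"
    using assms by (simp_all only: alt_even alt_odd x_def invol_prod_inv[OF assms])
  from k show ?thesis
  proof
    assume m: "m = 2*k"
    have "alt_prod G a b m = alt_prod G b a m \<longleftrightarrow> x = inv x"
      unfolding m altab altba ..
    also have "\<dots> \<longleftrightarrow> x \<otimes> x = \<one>" using x eq_inv_iff by blast
    also have "x \<otimes> x = (a \<otimes> b) [^] m" using m ab by (simp add: x_def nat_pow_mult mult_2)
    finally show ?thesis .
  next
    assume m: "m = Suc (2*k)"
    have "alt_prod G a b m = alt_prod G b a m \<longleftrightarrow> x \<otimes> a = inv x \<otimes> b"
      unfolding m altab altba ..
    also have "\<dots> \<longleftrightarrow> x \<otimes> a \<otimes> b = inv x"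
    proof
      assume "x \<otimes> a = inv x \<otimes> b"
      then have "x \<otimes> a \<otimes> b = inv x \<otimes> b \<otimes> b" by simp
      also have "\<dots> = inv x" using x assms by (simp add: m_assoc)
      finally show "x \<otimes> a \<otimes> b = inv x" .
    next
      assume "x \<otimes> a \<otimes> b = inv x"
      then have "x \<otimes> a \<otimes> b \<otimes> b = inv x \<otimes> b" by simp
      moreover have "x \<otimes> a \<otimes> b \<otimes> b = x \<otimes> a" using x assms by (simp add: m_assoc)
      ultimately show "x \<otimes> a = inv x \<otimes> b" by simp
    qed
    also have "\<dots> \<longleftrightarrow> x \<otimes> (a \<otimes> b) \<otimes> x = \<one>"
    proof -
      have "x \<otimes> a \<otimes> b = x \<otimes> (a \<otimes> b)" using x assms by (simp add: m_assoc)
      moreover have "x \<otimes> (a \<otimes> b) \<in> carrier G" using x ab by simp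
      ultimately show ?thesis using x eq_inv_iff by simp
    qed
    also have "x \<otimes> (a \<otimes> b) \<otimes> x = (a \<otimes> b) [^] m"
    proof -
      have "x \<otimes> (a \<otimes> b) = (a \<otimes> b) [^] Suc k" by (simp add: x_def)
      then have "x \<otimes> (a \<otimes> b) \<otimes> x = (a \<otimes> b) [^] Suc k \<otimes> (a \<otimes> b) [^] k" by (simp add: x_def)
      also have "\<dots> = (a \<otimes> b) [^] (Suc k + k)" using ab by (simp only: nat_pow_mult)
      finally show ?thesis using m by (simp add: mult_2)
    qed
    finally show ?thesis .
  qed
qed

end



locale cox = grp W for W :: "'g monoid" (structure) +
  fixes S :: "'g set"
  assumes cs: "coxeter_system W S"
begin

lemma S_sub: "S \<subseteq> carrier W" using cs by (simp add: coxeter_system_def)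
lemma S_car: "s \<in> S \<Longrightarrow> s \<in> carrier W" using S_sub by auto
lemma S_invol: "s \<in> S \<Longrightarrow> s \<otimes> s = \<one>" using cs by (simp add: coxeter_system_def)
lemma gen: "generate W S = carrier W" using cs by (simp add: coxeter_system_def)

lemma word_prod_Nil [simp]: "word_prod W [] = \<one>" by (simp add: word_prod_def)
lemma word_prod_Cons [simp]: "word_prod W (x # xs) = x \<otimes> word_prod W xs" by (simp add: word_prod_def)

lemma word_prod_closed: "set ws \<subseteq> S \<Longrightarrow> word_prod W ws \<in> carrier W"
  by (induction ws) (auto simp: S_car)

lemma word_prod_append:
  "set xs \<subseteq> S \<Longrightarrow> set ys \<subseteq> S \<Longrightarrow> word_prod W (xs @ ys) = word_prod W xs \<otimes> word_prod W ys"
  by (induction xs) (auto simp: S_car word_prod_closed m_assoc)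

lemma word_exists: "w \<in> carrier W \<Longrightarrow> \<exists>ws. set ws \<subseteq> S \<and> word_prod W ws = w"
proof -
  have "w \<in> generate W S \<Longrightarrow> \<exists>ws. set ws \<subseteq> S \<and> word_prod W ws = w" for w
  proof (induction rule: generate.induct)
    case one then show ?case by (intro exI[of _ "[]"]) simp
  next
    case (incl h) then show ?case by (intro exI[of _ "[h]"]) (simp add: S_car)
  next
    case (inv h)
    then have "inv h = h" using S_invol S_car by (intro inv_equality) auto
    then show ?case using inv by (intro exI[of _ "[h]"]) (simp add: S_car)
  next
    case (eng h1 h2)
    then obtain xs ys where "set xs \<subseteq> S" "word_prod W xs = h1" "set ys \<subseteq> S" "word_prod W ys = h2"
      by blast
    then show ?case by (intro exI[of _ "xs @ ys"]) (simp add: word_prod_append)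
  qed
  then show "w \<in> carrier W \<Longrightarrow> ?thesis" using gen by simp
qed

abbreviation len where "len \<equiv> cox_length W S"

lemma len_word: "w \<in> carrier W \<Longrightarrow> \<exists>ws. length ws = len w \<and> set ws \<subseteq> S \<and> word_prod W ws = w"
  unfolding cox_length_def using word_exists by (rule_tac LeastI_ex) blast

lemma len_le: "set ws \<subseteq> S \<Longrightarrow> len (word_prod W ws) \<le> length ws"
  unfolding cox_length_def by (rule Least_le) blast

lemma len_mult_le: "w \<in> carrier W \<Longrightarrow> s \<in> S \<Longrightarrow> len (w \<otimes> s) \<le> len w + 1"
proof -
  assume w: "w \<in> carrier W" and s: "s \<in> S"
  obtain ws where ws: "length ws = len w" "set ws \<subseteq> S" "word_prod W ws = w" using len_word[OF w] by blast
  have "word_prod W (ws @ [s]) = w \<otimes> s" using ws s by (simp add: word_prod_append S_car)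
  then show ?thesis using len_le[of "ws @ [s]"] ws s by simp
qed

lemma len_mult_ge: "w \<in> carrier W \<Longrightarrow> s \<in> S \<Longrightarrow> len w \<le> len (w \<otimes> s) + 1"
proof -
  assume w: "w \<in> carrier W" and s: "s \<in> S"
  have "w = (w \<otimes> s) \<otimes> s" using w s S_invol S_car by (simp add: m_assoc)
  then show ?thesis using len_mult_le[of "w \<otimes> s" s] w s S_car by simp
qed

lemma len_one: "len \<one> = 0"
  using len_le[of "[]"] by simp

lemma len_0: "w \<in> carrier W \<Longrightarrow> len w = 0 \<Longrightarrow> w = \<one>"
  using len_word by fastforce

lemma len_last:
  assumes "w \<in> carrier W" "len w = Suc p"
  shows "\<exists>v r. v \<in> carrier W \<and> r \<in> S \<and> w = v \<otimes> r \<and> len v = p"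
proof -
  obtain ws where ws: "length ws = Suc p" "set ws \<subseteq> S" "word_prod W ws = w"
    using len_word[OF assms(1)] assms(2) by auto
  obtain xs r where xr: "ws = xs @ [r]" using ws(1) by (metis length_Suc_conv_rev)
  have xs: "set xs \<subseteq> S" "r \<in> S" using ws(2) xr by auto
  define v where "v = word_prod W xs"
  have v: "v \<in> carrier W" using xs by (simp add: v_def word_prod_closed)
  have wv: "w = v \<otimes> r" using ws(3) xr xs by (simp add: word_prod_append v_def S_car)
  have "len v \<le> p" using len_le[OF xs(1)] ws(1) xr by (simp add: v_def)
  moreover have "Suc p \<le> len v + 1" using len_mult_le[OF v xs(2)] wv assms(2) by simp
  ultimately show ?thesis using v xs wv by auto
qed

lemma alt_S_closed: "a \<in> S \<Longrightarrow> b \<in> S \<Longrightarrow> alt_prod W a b k \<in> carrier W"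
  using alt_closed S_car by auto

lemma len_alt:
  assumes "y \<in> carrier W" "a \<in> S" "b \<in> S"
  shows "len y \<le> len (y \<otimes> alt_prod W a b k) + k \<and> len (y \<otimes> alt_prod W a b k) \<le> len y + k"
proof (induction k)
  case 0 then show ?case using assms by simp
next
  case (Suc k)
  define c where "c = (if even k then a else b)"
  have c: "c \<in> S" using assms by (simp add: c_def)
  have yk: "y \<otimes> alt_prod W a b k \<in> carrier W" using assms alt_S_closed by simp
  have e: "y \<otimes> alt_prod W a b (Suc k) = (y \<otimes> alt_prod W a b k) \<otimes> c"
    using assms alt_S_closed c S_car by (simp add: c_def m_assoc)
  show ?case using Suc len_mult_le[OF yk c] len_mult_ge[OF yk c] unfolding e by simp
qed

end



definition wr :: "'g monoid \<Rightarrow> ('g \<times> ('g \<Rightarrow> int)) monoid" where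
  "wr W = \<lparr>carrier = {a. fst a \<in> carrier W \<and> snd a \<in> extensional (carrier W)},
     mult = (\<lambda>a b. (fst a \<otimes>\<^bsub>W\<^esub> fst b, restrict (\<lambda>x. snd a x + snd b (x \<otimes>\<^bsub>W\<^esub> fst a)) (carrier W))),
     one = (\<one>\<^bsub>W\<^esub>, restrict (\<lambda>x. 0) (carrier W))\<rparr>"

lemma wr_carrier: "a \<in> carrier (wr W) \<longleftrightarrow> fst a \<in> carrier W \<and> snd a \<in> extensional (carrier W)"
  by (simp add: wr_def)
lemma wr_mult: "a \<otimes>\<^bsub>wr W\<^esub> b = (fst a \<otimes>\<^bsub>W\<^esub> fst b, restrict (\<lambda>x. snd a x + snd b (x \<otimes>\<^bsub>W\<^esub> fst a)) (carrier W))"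
  by (simp add: wr_def)
lemma wr_one: "\<one>\<^bsub>wr W\<^esub> = (\<one>\<^bsub>W\<^esub>, restrict (\<lambda>x. 0) (carrier W))"
  by (simp add: wr_def)

lemma (in grp) wr_group: "group (wr G)"
proof (rule groupI)
  fix a b assume "a \<in> carrier (wr G)" "b \<in> carrier (wr G)"
  then show "a \<otimes>\<^bsub>wr G\<^esub> b \<in> carrier (wr G)" by (simp add: wr_carrier wr_mult)
next
  show "\<one>\<^bsub>wr G\<^esub> \<in> carrier (wr G)" by (simp add: wr_carrier wr_one)
next
  fix a b c assume abc: "a \<in> carrier (wr G)" "b \<in> carrier (wr G)" "c \<in> carrier (wr G)"
  then show "a \<otimes>\<^bsub>wr G\<^esub> b \<otimes>\<^bsub>wr G\<^esub> c = a \<otimes>\<^bsub>wr G\<^esub> (b \<otimes>\<^bsub>wr G\<^esub> c)"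
    by (auto simp: wr_carrier wr_mult m_assoc fun_eq_iff)
next
  fix a assume a: "a \<in> carrier (wr G)"
  then show "\<one>\<^bsub>wr G\<^esub> \<otimes>\<^bsub>wr G\<^esub> a = a"
    by (cases a) (auto simp: wr_carrier wr_mult wr_one fun_eq_iff extensional_def)
next
  fix a assume a: "a \<in> carrier (wr G)"
  define y where "y = (inv (fst a), restrict (\<lambda>x. - snd a (x \<otimes> inv (fst a))) (carrier G))"
  have "y \<in> carrier (wr G)" using a by (simp add: y_def wr_carrier)
  moreover have "y \<otimes>\<^bsub>wr G\<^esub> a = \<one>\<^bsub>wr G\<^esub>"
    using a by (auto simp: y_def wr_carrier wr_mult wr_one fun_eq_iff)
  ultimately show "\<exists>y\<in>carrier (wr G). y \<otimes>\<^bsub>wr G\<^esub> a = \<one>\<^bsub>wr G\<^esub>" by blast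
qed

definition transp :: "('b, 'c) monoid_scheme \<Rightarrow> ('b \<Rightarrow> 'd) \<Rightarrow> 'd monoid" where
  "transp G e = \<lparr>carrier = e ` carrier G,
     mult = (\<lambda>a b. e (inv_into (carrier G) e a \<otimes>\<^bsub>G\<^esub> inv_into (carrier G) e b)),
     one = e \<one>\<^bsub>G\<^esub>\<rparr>"

lemma transp_group:
  assumes G: "group G" and e: "inj_on e (carrier G)"
  shows "group (transp G e)" "e \<in> hom G (transp G e)"
proof -
  interpret G: group G by (rule G)
  have iv: "inv_into (carrier G) e (e x) = x" if "x \<in> carrier G" for x
    using e that by (simp add: inv_into_f_f)
  have mul: "e x \<otimes>\<^bsub>transp G e\<^esub> e y = e (x \<otimes>\<^bsub>G\<^esub> y)" if "x \<in> carrier G" "y \<in> carrier G" for x y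
    using that by (simp add: transp_def iv)
  have car: "carrier (transp G e) = e ` carrier G" by (simp add: transp_def)
  have one: "\<one>\<^bsub>transp G e\<^esub> = e \<one>\<^bsub>G\<^esub>" by (simp add: transp_def)
  show "group (transp G e)"
  proof (rule groupI)
    fix a b assume "a \<in> carrier (transp G e)" "b \<in> carrier (transp G e)"
    then show "a \<otimes>\<^bsub>transp G e\<^esub> b \<in> carrier (transp G e)" using car mul by auto
  next
    show "\<one>\<^bsub>transp G e\<^esub> \<in> carrier (transp G e)" using car one by auto
  next
    fix a b c assume "a \<in> carrier (transp G e)" "b \<in> carrier (transp G e)" "c \<in> carrier (transp G e)"
    then obtain x y z where "x \<in> carrier G" "y \<in> carrier G" "z \<in> carrier G" "a = e x" "b = e y" "c = e z"
      using car by auto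
    then show "a \<otimes>\<^bsub>transp G e\<^esub> b \<otimes>\<^bsub>transp G e\<^esub> c = a \<otimes>\<^bsub>transp G e\<^esub> (b \<otimes>\<^bsub>transp G e\<^esub> c)"
      by (simp add: mul G.m_assoc)
  next
    fix a assume "a \<in> carrier (transp G e)"
    then obtain x where "x \<in> carrier G" "a = e x" using car by auto
    then show "\<one>\<^bsub>transp G e\<^esub> \<otimes>\<^bsub>transp G e\<^esub> a = a" by (simp add: one mul)
  next
    fix a assume "a \<in> carrier (transp G e)"
    then obtain x where x: "x \<in> carrier G" "a = e x" using car by auto
    then have "e (inv\<^bsub>G\<^esub> x) \<in> carrier (transp G e)" "e (inv\<^bsub>G\<^esub> x) \<otimes>\<^bsub>transp G e\<^esub> a = \<one>\<^bsub>transp G e\<^esub>"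
      using car by (auto simp: one mul)
    then show "\<exists>y\<in>carrier (transp G e). y \<otimes>\<^bsub>transp G e\<^esub> a = \<one>\<^bsub>transp G e\<^esub>" by blast
  qed
  show "e \<in> hom G (transp G e)"
    by (rule homI) (auto simp: car mul)
qed

lemma transp_inv:
  assumes "inj_on e (carrier G)" "x \<in> carrier G"
  shows "inv_into (carrier G) e (e x) = x"
  using assms by (simp add: inv_into_f_f)

definition enc :: "'g monoid \<Rightarrow> 'g \<times> ('g \<Rightarrow> int) \<Rightarrow> 'g list set" where
  "enc W a = insert [fst a] ((\<lambda>x. x # x # replicate (int_encode (snd a x)) x) ` carrier W)"

lemma enc_inj: "inj_on (enc W) (carrier (wr W))"
proof (rule inj_onI)
  fix a b assume a: "a \<in> carrier (wr W)" and b: "b \<in> carrier (wr W)" and eq: "enc W a = enc W b"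
  have "[fst a] \<in> enc W a" by (simp add: enc_def)
  then have "[fst a] \<in> enc W b" using eq by simp
  then have f: "fst a = fst b" by (auto simp: enc_def)
  have "snd a x = snd b x" for x
  proof (cases "x \<in> carrier W")
    case True
    then have "x # x # replicate (int_encode (snd a x)) x \<in> enc W a" by (auto simp: enc_def)
    then have "x # x # replicate (int_encode (snd a x)) x \<in> enc W b" using eq by simp
    then obtain y where "y \<in> carrier W" "x # x # replicate (int_encode (snd a x)) x = y # y # replicate (int_encode (snd b y)) y"
      by (auto simp: enc_def)
    then have "int_encode (snd a x) = int_encode (snd b x)"
      by (metis length_replicate list.inject)
    then show ?thesis using inj_int_encode by (metis inj_on_def UNIV_I)
  next
    case False
    then show ?thesis using a b by (simp add: wr_carrier extensional_def)
  qed
  then show "a = b" using f by (simp add: prod_eq_iff fun_eq_iff)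
qed




lemma sum_if_lt: "(\<Sum>i<m. if i < k then (a::int) else b) = int (min k m) * a + int (m - min k m) * b"
proof (induction m)
  case 0 then show ?case by simp
next
  case (Suc m)
  show ?case
  proof (cases "m < k")
    case True
    then have "min k (Suc m) = Suc m" "min k m = m" by auto
    then show ?thesis using Suc True by (simp add: algebra_simps)
  next
    case False
    then have "min k (Suc m) = k" "min k m = k" "Suc m - k = Suc (m - k)" by auto
    then show ?thesis using Suc False by (simp add: algebra_simps)
  qed
qed

lemma grp_wr: assumes "group W" shows "grp (wr W)"
proof -
  have "grp W" using assms by (simp add: grp_def)
  then have "group (wr W)" by (rule grp.wr_group)
  then show ?thesis by (simp add: grp_def)
qed

locale coxor = cox W S for W :: "'g monoid" (structure) and S +
  fixes ori :: "'g \<Rightarrow> 'g \<Rightarrow> int"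
  assumes fin: "finite (carrier W)"
    and ori: "orientation W S ori"
begin

lemma ori_parts:
  "\<forall>w\<in>carrier W. \<forall>s\<in>S. ori w s \<in> {1, -1}"
  "\<forall>w\<in>carrier W. \<forall>s\<in>S. ori (w \<otimes> s) s = - ori w s"
  using ori unfolding orientation_def by (rule conjunct1, rule conjunct1[OF conjunct2])
lemma ori_pm: "w \<in> carrier W \<Longrightarrow> s \<in> S \<Longrightarrow> ori w s = 1 \<or> ori w s = -1"
  using ori_parts(1) by blast
lemma ori_flip: "w \<in> carrier W \<Longrightarrow> s \<in> S \<Longrightarrow> ori (w \<otimes> s) s = - ori w s"
  using ori_parts(2) by blast
lemma ori_OR2:
  assumes "s \<in> S" "t \<in> S" "w \<in> carrier W" "cox_m W s t \<noteq> 0"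
  shows "\<exists>k\<le>cox_m W s t.
          (\<forall>i<cox_m W s t. or_seq W ori w s t i = (if i < k then 1 else -1) \<and>
                  or_seq W ori w t s i = (if i < cox_m W s t - k then -1 else 1)) \<or>
          (\<forall>i<cox_m W s t. or_seq W ori w s t i = (if i < k then -1 else 1) \<and>
                  or_seq W ori w t s i = (if i < cox_m W s t - k then 1 else -1))"
  using ori assms unfolding orientation_def Let_def by blast

lemma grpWR: "grp (wr W)" by (rule grp_wr[OF is_group])

definition gen :: "'g \<Rightarrow> 'g \<times> ('g \<Rightarrow> int)" where
  "gen s = (s, restrict (\<lambda>x. ori x s) (carrier W))"

lemma gen_car: "s \<in> S \<Longrightarrow> gen s \<in> carrier (wr W)"
  by (simp add: gen_def wr_carrier S_car)

lemma gen_invol: "s \<in> S \<Longrightarrow> gen s \<otimes>\<^bsub>wr W\<^esub> gen s = \<one>\<^bsub>wr W\<^esub>"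
  by (auto simp: gen_def wr_mult wr_one S_invol S_car ori_flip fun_eq_iff)

lemma alt_gen:
  assumes "s \<in> S" "t \<in> S"
  shows "alt_prod (wr W) (gen s) (gen t) n =
    (alt_prod W s t n, restrict (\<lambda>x. \<Sum>i<n. or_seq W ori x s t i) (carrier W))"
proof (induction n)
  case 0 then show ?case by (simp add: wr_one restrict_def)
next
  case (Suc n)
  have "alt_prod (wr W) (gen s) (gen t) (Suc n) =
     (alt_prod W s t n, restrict (\<lambda>x. \<Sum>i<n. or_seq W ori x s t i) (carrier W)) \<otimes>\<^bsub>wr W\<^esub>
       gen (if even n then s else t)"
    by (simp only: alt_prod.simps Suc.IH if_distrib[of gen])
  also have "\<dots> = (alt_prod W s t (Suc n), restrict (\<lambda>x. \<Sum>i<Suc n. or_seq W ori x s t i) (carrier W))"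
    using assms alt_S_closed by (auto simp: wr_mult gen_def fun_eq_iff or_seq_def)
  finally show ?case .
qed

lemma m_pos: "s \<in> S \<Longrightarrow> t \<in> S \<Longrightarrow> cox_m W s t \<ge> 1"
  unfolding cox_m_def using ord_ge_1[OF fin] S_car by auto

lemma braid_W: "s \<in> S \<Longrightarrow> t \<in> S \<Longrightarrow> alt_prod W s t (cox_m W s t) = alt_prod W t s (cox_m W s t)"
  using braid_iff[of s t "cox_m W s t"] S_car S_invol unfolding cox_m_def by simp

lemma gen_rel:
  assumes s: "s \<in> S" and t: "t \<in> S"
  shows "(gen s \<otimes>\<^bsub>wr W\<^esub> gen t) [^]\<^bsub>wr W\<^esub> cox_m W s t = \<one>\<^bsub>wr W\<^esub>"
proof -
  define m where "m = cox_m W s t"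
  have m0: "m \<noteq> 0" using m_pos[OF s t] by (simp add: m_def)
  have sums: "(\<Sum>i<m. or_seq W ori x s t i) = (\<Sum>i<m. or_seq W ori x t s i)" if x: "x \<in> carrier W" for x
  proof -
    obtain k where k: "k \<le> m" and
      H: "(\<forall>i<m. or_seq W ori x s t i = (if i < k then 1 else -1) \<and>
                  or_seq W ori x t s i = (if i < m - k then -1 else 1)) \<or>
          (\<forall>i<m. or_seq W ori x s t i = (if i < k then -1 else 1) \<and>
                  or_seq W ori x t s i = (if i < m - k then 1 else -1))"
      using ori_OR2[OF s t x] m0 unfolding m_def by blast
    from H show ?thesis
    proof
      assume A: "\<forall>i<m. or_seq W ori x s t i = (if i < k then 1 else -1) \<and>
                  or_seq W ori x t s i = (if i < m - k then -1 else 1)"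
      have "(\<Sum>i<m. or_seq W ori x s t i) = (\<Sum>i<m. if i < k then 1 else -1)"
        using A by (intro sum.cong) auto
      moreover have "(\<Sum>i<m. or_seq W ori x t s i) = (\<Sum>i<m. if i < m - k then -1 else 1)"
        using A by (intro sum.cong) auto
      ultimately show ?thesis using k by (simp add: sum_if_lt min_def)
    next
      assume A: "\<forall>i<m. or_seq W ori x s t i = (if i < k then -1 else 1) \<and>
                  or_seq W ori x t s i = (if i < m - k then 1 else -1)"
      have "(\<Sum>i<m. or_seq W ori x s t i) = (\<Sum>i<m. if i < k then -1 else 1)"
        using A by (intro sum.cong) auto
      moreover have "(\<Sum>i<m. or_seq W ori x t s i) = (\<Sum>i<m. if i < m - k then 1 else -1)"
        using A by (intro sum.cong) auto
      ultimately show ?thesis using k by (simp add: sum_if_lt min_def)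
    qed
  qed
  have "alt_prod (wr W) (gen s) (gen t) m = alt_prod (wr W) (gen t) (gen s) m"
    using alt_gen[OF s t] alt_gen[OF t s] braid_W[OF s t] sums unfolding m_def
    by (auto simp: fun_eq_iff)
  then show ?thesis
    using grp.braid_iff[OF grpWR gen_car[OF s] gen_car[OF t] gen_invol[OF s] gen_invol[OF t]]
    by (simp add: m_def)
qed

lemma potential_exists:
  "\<exists>hh. \<forall>w\<in>carrier W. \<forall>s\<in>S. hh (w \<otimes> s) = hh w + ori w s"
proof -
  define H where "H = transp (wr W) (enc W)"
  have GW: "group (wr W)" using grpWR by (simp add: grp_def)
  have H: "group H" "enc W \<in> hom (wr W) H"
    using transp_group[OF GW enc_inj] by (auto simp: H_def)
  interpret H: group H by (rule H(1))
  interpret WR: group "wr W" by (rule GW)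
  have f: "(\<lambda>s. enc W (gen s)) \<in> S \<rightarrow> carrier H"
    using H(2) gen_car by (auto simp: hom_def)
  have rel: "\<forall>s\<in>S. \<forall>t\<in>S. (enc W (gen s) \<otimes>\<^bsub>H\<^esub> enc W (gen t)) [^]\<^bsub>H\<^esub> cox_m W s t = \<one>\<^bsub>H\<^esub>"
  proof (intro ballI)
    fix s t assume s: "s \<in> S" and t: "t \<in> S"
    have "enc W (gen s) \<otimes>\<^bsub>H\<^esub> enc W (gen t) = enc W (gen s \<otimes>\<^bsub>wr W\<^esub> gen t)"
      using hom_mult[OF H(2) gen_car[OF s] gen_car[OF t]] by simp
    then have "(enc W (gen s) \<otimes>\<^bsub>H\<^esub> enc W (gen t)) [^]\<^bsub>H\<^esub> cox_m W s t
        = enc W ((gen s \<otimes>\<^bsub>wr W\<^esub> gen t) [^]\<^bsub>wr W\<^esub> cox_m W s t)"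
      using hom_nat_pow[OF H(2) _ GW H(1)] gen_car[OF s] gen_car[OF t] by simp
    also have "\<dots> = enc W \<one>\<^bsub>wr W\<^esub>" using gen_rel[OF s t] by simp
    also have "\<dots> = \<one>\<^bsub>H\<^esub>" using hom_one[OF H(2) GW H(1)] by simp
    finally show "(enc W (gen s) \<otimes>\<^bsub>H\<^esub> enc W (gen t)) [^]\<^bsub>H\<^esub> cox_m W s t = \<one>\<^bsub>H\<^esub>" .
  qed
  obtain k where k: "k \<in> hom W H" "\<forall>s\<in>S. k s = enc W (gen s)"
    using cs f rel H(1) unfolding coxeter_system_def H_def by blast
  define F where "F w = inv_into (carrier (wr W)) (enc W) (k w)" for w
  have carH: "carrier H = enc W ` carrier (wr W)" by (simp add: H_def transp_def)
  have Fc: "F w \<in> carrier (wr W)" and eF: "enc W (F w) = k w" if "w \<in> carrier W" for w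
  proof -
    have "k w \<in> enc W ` carrier (wr W)" using k(1) that carH by (auto simp: hom_def)
    then show "F w \<in> carrier (wr W)" "enc W (F w) = k w"
      by (auto simp: F_def inv_into_into f_inv_into_f)
  qed
  have Fmult: "F (w \<otimes> v) = F w \<otimes>\<^bsub>wr W\<^esub> F v" if "w \<in> carrier W" "v \<in> carrier W" for w v
  proof -
    have "enc W (F (w \<otimes> v)) = k w \<otimes>\<^bsub>H\<^esub> k v" using that eF hom_mult[OF k(1)] by simp
    also have "\<dots> = enc W (F w \<otimes>\<^bsub>wr W\<^esub> F v)" using that eF Fc hom_mult[OF H(2)] by simp
    finally show ?thesis using enc_inj that Fc by (meson inj_onD m_closed WR.m_closed)
  qed
  have Fhom: "F \<in> hom W (wr W)" by (rule homI) (use Fc Fmult in auto)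
  have Fgen: "F s = gen s" if "s \<in> S" for s
    using inv_into_f_f[OF enc_inj gen_car[OF that]] k(2) that by (simp add: F_def)
  have Ffst: "fst (F w) = w" if "w \<in> carrier W" for w
  proof -
    have "w \<in> generate W S \<Longrightarrow> fst (F w) = w" for w
    proof (induction rule: generate.induct)
      case one then show ?case using hom_one[OF Fhom is_group GW] by (simp add: wr_one)
    next
      case (incl h) then show ?case by (simp add: Fgen gen_def)
    next
      case (inv h)
      then have "inv h = h" using S_invol S_car by (intro inv_equality) auto
      then show ?case using inv by (simp add: Fgen gen_def)
    next
      case (eng h1 h2)
      have "h1 \<in> carrier W" "h2 \<in> carrier W" using eng.hyps gen by auto
      then show ?case using eng by (simp add: Fmult wr_mult)
    qed
    then show ?thesis using that gen by simp
  qed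
  define hh where "hh w = snd (F w) \<one>" for w
  have "hh (w \<otimes> s) = hh w + ori w s" if "w \<in> carrier W" "s \<in> S" for w s
    using that S_car by (simp add: hh_def Fmult Fgen wr_mult gen_def Ffst)
  then show ?thesis by blast
qed

end



context coxor begin

lemma all_minus:
  assumes s: "s \<in> S" and t: "t \<in> S" and w: "w \<in> carrier W"
    and os: "ori w s = -1" and ot: "ori w t = -1"
  shows "\<forall>i<cox_m W s t. or_seq W ori w s t i = -1"
proof -
  define m where "m = cox_m W s t"
  have m0: "m \<noteq> 0" using m_pos[OF s t] by (simp add: m_def)
  have z1: "or_seq W ori w s t 0 = -1" using os w by (simp add: or_seq_def)
  have z2: "or_seq W ori w t s 0 = -1" using ot w by (simp add: or_seq_def)
  obtain k where k: "k \<le> m" and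
      H: "(\<forall>i<m. or_seq W ori w s t i = (if i < k then 1 else -1) \<and>
                  or_seq W ori w t s i = (if i < m - k then -1 else 1)) \<or>
          (\<forall>i<m. or_seq W ori w s t i = (if i < k then -1 else 1) \<and>
                  or_seq W ori w t s i = (if i < m - k then 1 else -1))"
    using ori_OR2[OF s t w] m0 unfolding m_def by blast
  from H have "\<forall>i<m. or_seq W ori w s t i = -1"
  proof
    assume A: "\<forall>i<m. or_seq W ori w s t i = (if i < k then 1 else -1) \<and>
                  or_seq W ori w t s i = (if i < m - k then -1 else 1)"
    then have "or_seq W ori w s t 0 = (if 0 < k then 1 else -1)" using m0 by auto
    then have "k = 0" using z1 by (auto split: if_splits)
    then show ?thesis using A by auto
  next
    assume A: "\<forall>i<m. or_seq W ori w s t i = (if i < k then -1 else 1) \<and>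
                  or_seq W ori w t s i = (if i < m - k then 1 else -1)"
    then have "or_seq W ori w t s 0 = (if 0 < m - k then 1 else -1)" using m0 by auto
    then have "m \<le> k" using z2 by (auto split: if_splits)
    then show ?thesis using A by auto
  qed
  then show ?thesis by (simp add: m_def)
qed

lemma cox_m_sym: "s \<in> S \<Longrightarrow> t \<in> S \<Longrightarrow> cox_m W s t = cox_m W t s"
proof -
  assume s: "s \<in> S" and t: "t \<in> S"
  have "inv (s \<otimes> t) = t \<otimes> s" using inv_invol_prod S_car S_invol s t by blast
  then have "ord (t \<otimes> s) = ord (s \<otimes> t)" using ord_inv[of "s \<otimes> t"] S_car s t by simp
  then show ?thesis by (simp add: cox_m_def)
qed

lemma key:
  assumes step: "\<forall>w\<in>carrier W. \<forall>s\<in>S. hh (w \<otimes> s) = hh w + ori w s"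
    and w0: "w0 \<in> carrier W"
    and sink: "\<forall>s\<in>S. ori w0 s = -1"
    and IH: "\<forall>u\<in>carrier W. len u \<le> p \<longrightarrow> hh (w0 \<otimes> u) = hh w0 - int (len u)"
    and v: "v \<in> carrier W" and r: "r \<in> S" and lv: "len v = p" and lvr: "len (v \<otimes> r) = Suc p"
  shows "ori (w0 \<otimes> v) r = -1"
proof (cases p)
  case 0
  then have "v = \<one>" using len_0 v lv by simp
  then show ?thesis using sink r w0 by simp
next
  case (Suc q)
  have helper: "ori (w0 \<otimes> x) y = -1"
    if x: "x \<in> carrier W" and y: "y \<in> S" and l1: "len x \<le> p" and l2: "len (x \<otimes> y) \<le> p"
      and l3: "len x \<le> len (x \<otimes> y)" for x y
  proof -
    have xy: "x \<otimes> y \<in> carrier W" using x y S_car by simp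
    have "hh (w0 \<otimes> x \<otimes> y) = hh (w0 \<otimes> x) + ori (w0 \<otimes> x) y" using step x y w0 by simp
    then have "hh (w0 \<otimes> (x \<otimes> y)) = hh (w0 \<otimes> x) + ori (w0 \<otimes> x) y"
      using x y w0 S_car by (simp add: m_assoc)
    then have "ori (w0 \<otimes> x) y = int (len x) - int (len (x \<otimes> y))"
      using IH x xy l1 l2 by simp
    then have "ori (w0 \<otimes> x) y \<le> 0" using l3 by simp
    then show ?thesis using ori_pm[of "w0 \<otimes> x" y] x y w0 by auto
  qed
  obtain v'' s where v'': "v'' \<in> carrier W" "s \<in> S" "v = v'' \<otimes> s" "len v'' = q"
    using len_last[OF v] lv Suc by blast
  have vs: "v \<otimes> s = v''" using v'' S_invol S_car by (simp add: m_assoc)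
  define P where "P j \<longleftrightarrow> j \<le> p \<and> len (v \<otimes> alt_prod W s r j) + j = p" for j
  have P1: "P 1" using vs v'' Suc by (simp add: P_def S_car v)
  have Pb: "\<And>j. P j \<Longrightarrow> j \<le> p" by (simp add: P_def)
  define J where "J = Greatest P"
  have PJ: "P J" using GreatestI_nat[of P 1 p] P1 Pb by (simp add: J_def)
  have J1: "1 \<le> J" using Greatest_le_nat[of P 1 p] P1 Pb by (simp add: J_def)
  have Jmax: "\<And>j. P j \<Longrightarrow> j \<le> J" using Greatest_le_nat[of P _ p] Pb by (simp add: J_def)
  have Jp: "J \<le> p" using PJ by (simp add: P_def)
  have Pstep: "P j" if Pj1: "P (Suc j)" for j
  proof -
    have c: "(if even j then s else r) \<in> S" using v'' r by simp
    have y: "v \<otimes> alt_prod W s r j \<in> carrier W" using v alt_S_closed v'' r by simp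
    have e: "v \<otimes> alt_prod W s r (Suc j) = (v \<otimes> alt_prod W s r j) \<otimes> (if even j then s else r)"
      using v v''(2) r alt_S_closed S_car c by (simp add: m_assoc)
    have "len (v \<otimes> alt_prod W s r j) \<le> len (v \<otimes> alt_prod W s r (Suc j)) + 1"
      unfolding e by (rule len_mult_ge[OF y c])
    moreover have "len v \<le> len (v \<otimes> alt_prod W s r j) + j"
      using len_alt[OF v v''(2) r] by blast
    ultimately show "P j" using Pj1 lv by (simp add: P_def)
  qed
  have Pdown: "P j" if "j \<le> J" for j
    using that PJ by (induction rule: inc_induct) (use Pstep in blast)+
  define x where "x = v \<otimes> alt_prod W s r J"
  define nx where "nx = (if even J then s else r)"
  define bk where "bk = (if even J then r else s)"
  have x: "x \<in> carrier W" using v alt_S_closed v''(2) r by (simp add: x_def)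
  have nx: "nx \<in> S" and bk: "bk \<in> S" using v''(2) r by (auto simp: nx_def bk_def)
  have lx: "len x + J = p" using PJ by (simp add: P_def x_def)
  obtain J' where J': "J = Suc J'" using J1 by (cases J) auto
  have xbk: "x \<otimes> bk = v \<otimes> alt_prod W s r J'"
  proof -
    have "bk = (if even J' then s else r)" using J' by (simp add: bk_def)
    then have "x = v \<otimes> alt_prod W s r J' \<otimes> bk"
      using J' v v''(2) r alt_S_closed S_car by (simp add: x_def m_assoc)
    then show ?thesis using v v''(2) r alt_S_closed S_car bk S_invol by (simp add: m_assoc)
  qed
  have "len v \<le> len (v \<otimes> alt_prod W s r J') + J'" using len_alt[OF v v''(2) r] by blast
  then have lxbk: "len x + 1 \<le> len (x \<otimes> bk)" using xbk lx lv J' by simp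
  have o1: "ori (w0 \<otimes> x) bk = -1"
    using helper[OF x bk] lxbk len_mult_le[OF x bk] lx J1 by simp
  have xnx: "x \<otimes> nx = v \<otimes> alt_prod W s r (Suc J)"
    using v v''(2) r alt_S_closed S_car by (simp add: x_def nx_def m_assoc)
  have lxnx: "len x \<le> len (x \<otimes> nx)"
  proof (rule ccontr)
    assume "\<not> len x \<le> len (x \<otimes> nx)"
    then have a: "len (x \<otimes> nx) + 1 = len x" using len_mult_ge[OF x nx] by simp
    then have "P (Suc J)" using xnx lx by (simp add: P_def)
    then show False using Jmax by fastforce
  qed
  have o2: "ori (w0 \<otimes> x) nx = -1"
    using helper[OF x nx] lxnx len_mult_le[OF x nx] lx J1 by simp
  have w0x: "w0 \<otimes> x \<in> carrier W" using w0 x by simp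
  have AM: "\<forall>i<cox_m W bk nx. or_seq W ori (w0 \<otimes> x) bk nx i = -1"
    by (rule all_minus[OF bk nx w0x o1 o2])
  have msr: "cox_m W bk nx = cox_m W s r"
    using cox_m_sym[OF v''(2) r] by (simp add: bk_def nx_def)
  have Jm: "J < cox_m W s r"
  proof (rule ccontr)
    assume "\<not> J < cox_m W s r"
    then have mJ: "cox_m W s r \<le> J" by simp
    define m where "m = cox_m W s r"
    have m1: "1 \<le> m" using m_pos[OF v''(2) r] by (simp add: m_def)
    then obtain m' where m': "m = Suc m'" by (cases m) auto
    have Pm: "P m" using Pdown mJ by (simp add: m_def)
    have "alt_prod W s r m = alt_prod W r s m" using braid_W[OF v''(2) r] by (simp add: m_def)
    also have "\<dots> = r \<otimes> alt_prod W s r m'" using m' alt_prepend S_car r v''(2) by simp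
    finally have "v \<otimes> alt_prod W s r m = (v \<otimes> r) \<otimes> alt_prod W s r m'"
      using v r v''(2) alt_S_closed S_car by (simp add: m_assoc)
    moreover have "len (v \<otimes> r) \<le> len ((v \<otimes> r) \<otimes> alt_prod W s r m') + m'"
      using len_alt[of "v \<otimes> r" s r m'] v r v''(2) S_car by simp
    ultimately show False using Pm lvr m' by (simp add: P_def)
  qed
  have "or_seq W ori (w0 \<otimes> x) bk nx J = -1" using AM Jm msr by simp
  moreover have "x \<otimes> alt_prod W bk nx J = v"
  proof -
    have "alt_prod W s r J \<otimes> alt_prod W bk nx J = \<one>"
      using alt_inv[of s r J] v''(2) r S_car S_invol by (simp add: bk_def nx_def)
    then show ?thesis using v v''(2) r alt_S_closed S_car bk nx by (simp add: x_def m_assoc)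
  qed
  moreover have "(if even J then bk else nx) = r" by (simp add: bk_def nx_def)
  ultimately show ?thesis using w0 x bk nx alt_S_closed by (simp add: or_seq_def m_assoc)
qed

lemma main: "\<exists>w0\<in>carrier W. \<forall>w\<in>carrier W. \<forall>s\<in>S. ori w s = orientation_towards W S w0 w s"
proof -
  obtain hh where step: "\<forall>w\<in>carrier W. \<forall>s\<in>S. hh (w \<otimes> s) = hh w + ori w s"
    using potential_exists by blast
  define M where "M = Max (hh ` carrier W)"
  have "M \<in> hh ` carrier W" unfolding M_def using fin by (intro Max_in) auto
  then obtain w0 where w0: "w0 \<in> carrier W" "hh w0 = M" by auto
  have maxi: "hh w \<le> hh w0" if "w \<in> carrier W" for w
    using fin that w0 by (simp add: M_def)
  have sink: "\<forall>s\<in>S. ori w0 s = -1"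
  proof
    fix s assume s: "s \<in> S"
    have "hh (w0 \<otimes> s) \<le> hh w0" using maxi w0 s S_car by simp
    then have "ori w0 s \<le> 0" using step w0 s by simp
    then show "ori w0 s = -1" using ori_pm[OF w0(1) s] by auto
  qed
  have C: "\<forall>v\<in>carrier W. len v = n \<longrightarrow> hh (w0 \<otimes> v) = hh w0 - int n" for n
  proof (induction n rule: less_induct)
    case (less n)
    show ?case
    proof (intro ballI impI)
      fix v assume v: "v \<in> carrier W" and lv: "len v = n"
      show "hh (w0 \<otimes> v) = hh w0 - int n"
      proof (cases n)
        case 0
        then have "v = \<one>" using len_0 v lv by simp
        then show ?thesis using 0 w0(1) by simp
      next
        case (Suc p)
        obtain v' r where v': "v' \<in> carrier W" "r \<in> S" "v = v' \<otimes> r" "len v' = p"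
          using len_last[OF v] lv Suc by blast
        have IH: "\<forall>u\<in>carrier W. len u \<le> p \<longrightarrow> hh (w0 \<otimes> u) = hh w0 - int (len u)"
          using less Suc by auto
        have o: "ori (w0 \<otimes> v') r = -1"
          by (rule key[OF step w0(1) sink IH v'(1,2,4)]) (use v' lv Suc in simp)
        have "hh (w0 \<otimes> v) = hh (w0 \<otimes> v' \<otimes> r)" using v' w0 S_car by (simp add: m_assoc)
        also have "\<dots> = hh (w0 \<otimes> v') + ori (w0 \<otimes> v') r" using step v' w0 by simp
        also have "\<dots> = hh w0 - int p - 1" using IH v' o by simp
        finally show ?thesis using Suc by simp
      qed
    qed
  qed
  have "\<forall>w\<in>carrier W. \<forall>s\<in>S. ori w s = orientation_towards W S w0 w s"
  proof (intro ballI)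
    fix w s assume w: "w \<in> carrier W" and s: "s \<in> S"
    define v where "v = inv w0 \<otimes> w"
    have v: "v \<in> carrier W" using w w0 by (simp add: v_def)
    have wv: "w = w0 \<otimes> v" using w w0 by (simp add: v_def m_assoc[symmetric])
    have vs: "v \<otimes> s \<in> carrier W" using v s S_car by simp
    have "hh (w \<otimes> s) = hh w + ori w s" using step w s by simp
    moreover have "hh (w \<otimes> s) = hh w0 - int (len (v \<otimes> s))"
      using C vs wv w0 v s S_car by (simp add: m_assoc)
    moreover have "hh w = hh w0 - int (len v)" using C v wv by simp
    ultimately have e: "ori w s = int (len v) - int (len (v \<otimes> s))" by simp
    show "ori w s = orientation_towards W S w0 w s"
      using ori_pm[OF w s] e unfolding orientation_towards_def v_def[symmetric] by auto
  qed
  then show ?thesis using w0 by blast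
qed

end

theorem lemma2p5p13:
  fixes W :: "'a monoid" and S :: "'a set" and ori :: "'a \<Rightarrow> 'a \<Rightarrow> int"
  assumes "coxeter_system W S"
    and "finite (carrier W)"
    and "orientation W S ori"
  shows "\<exists>w0\<in>carrier W. \<forall>w\<in>carrier W. \<forall>s\<in>S. ori w s = orientation_towards W S w0 w s"
proof -
  have g: "group W" using assms(1) by (simp add: coxeter_system_def)
  have "coxor W S ori"
    by (intro coxor.intro cox.intro coxor_axioms.intro cox_axioms.intro)
       (simp_all add: grp_def g assms)
  then show ?thesis by (rule coxor.main)
qed

end
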